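(* Consider $n$ agents on a directed graph $G=(\mathcal{V},\mathcal{E})$ with up to $f$ Byzantine agents, hypothesis set $\Theta$ and true state $\theta^*$ as in the context. Suppose that every $1$-dimensional reduced graph of $G$ contains exactly one source component, and that for every $\theta\neq\theta^*$ and every $1$-dimensional reduced graph $\mathcal{H}_1$ of $G$ with source component $\mathcal{S}_{\mathcal{H}_1}$, $$\sum_{j\in\mathcal{S}_{\mathcal{H}_1}}D\big(\ell_j(\cdot\mid\theta^* )\,\|\,\ell_j(\cdot\mid\theta)\big)\neq0 .$$ If all non-faulty agents run Pairwise Learning, then for every non-faulty agent $i$ and every $\theta\neq\theta^*$, $r_t^i(\theta^*,\theta)\to+\infty$ and $r_t^i(\theta,\theta^* )\to-\infty$ almost surely as $t\to\infty$.
   Context: Network: $\mathcal{V}=\{1,\dots,n\}$, $\mathcal{I}_i$ the incoming neighbors of $i$; synchronous iterations $t=1,2,\dots$. An unknown set $\mathcal{F}$ of at most $f$ agents is Byzantine (arbitrary behavior, possibly inconsistent messages, full knowledge, collusion); non-faulty agents know $f$; missing messages are replaced by a default value. Observations: $\Theta=\{\theta_1,\dots,\theta_m\}$; agent $i$ has finite signal space $\mathcal{S}_i$ and likelihoods $\ell_i(\cdot\mid\theta)$ with $\ell_i(w\mid\theta)>0$ for all $w,\theta$; in iteration $t$ it observes $s_t^i\sim\ell_i(\cdot\mid\theta^* )$, independently across agents and iterations; $\ell_i(s_{1,t}^i\mid\theta)=\prod_{r=1}^t\ell_i(s_r^i\mid\theta)$. $D$ is the Kullback–Leibler divergence $D(p\|q)=\sum_wp(w)\log\frac{p(w)}{q(w)}$.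 A $1$-dimensional reduced graph of $G$ is obtained by removing all faulty nodes and their incident links and then, for each non-faulty node, removing up to $f$ additional incoming links (for any possible faulty set of size at most $f$). A source component is a strongly connected component with no incoming links from outside it. Pairwise Learning at non-faulty agent $i$: initialize $r_0^i(\theta_1,\theta_2)=0$ for all ordered pairs $\theta_1\neq\theta_2$ in $\Theta$. In iteration $t\ge1$, for each ordered pair $(\theta_1,\theta_2)$, $\theta_1\ne\theta_2$: transmit $r_{t-1}^i(\theta_1,\theta_2)$ on all outgoing links; observe $s_t^i$ and receive values $\tilde r_{t-1}^j(\theta_1,\theta_2)$ from all $j\in\mathcal{I}_i$; sort the received values, remove the $f$ smallest and the $f$ largest, and let $\mathcal{I}_i^*[t]$ be the indices of the remaining neighbors; set $$r_t^i(\theta_1,\theta_2)=\frac{\sum_{j\in\mathcal{I}_i^*[t]}\tilde r_{t-1}^j(\theta_1,\theta_2)+r_{t-1}^i(\theta_1,\theta_2)}{|\mathcal{I}_i^*[t]|+1}+\log\frac{\ell_i(s_{1,t}^i\mid\theta_1)}{\ell_i(s_{1,t}^i\mid\theta_2)} .$$ *)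

theory Defs
  imports "HOL-Probability.Probability"
begin

definition in_nbrs :: "(nat \<times> nat) set \<Rightarrow> nat \<Rightarrow> nat set" where
  "in_nbrs E i = {j. (j, i) \<in> E}"

definition reduced_graph1 ::
  "nat set \<Rightarrow> (nat \<times> nat) set \<Rightarrow> nat \<Rightarrow> nat set \<Rightarrow> (nat \<times> nat) set \<Rightarrow> bool" where
  "reduced_graph1 V E f N EH \<longleftrightarrow>
     (\<exists>F'. F' \<subseteq> V \<and> card F' \<le> f \<and> N = V - F' \<and>
        EH \<subseteq> E \<inter> (N \<times> N) \<and>
        (\<forall>i\<in>N. card {j \<in> N. (j, i) \<in> E \<and> (j, i) \<notin> EH} \<le> f))"

definition strongly_connected_component ::
  "nat set \<Rightarrow> (nat \<times> nat) set \<Rightarrow> nat set \<Rightarrow> bool" where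
  "strongly_connected_component N EH S \<longleftrightarrow>
     S \<noteq> {} \<and> S \<subseteq> N \<and>
     (\<forall>u\<in>S. \<forall>v\<in>S. (u, v) \<in> EH\<^sup>*) \<and>
     (\<forall>w\<in>N. \<forall>u\<in>S. (u, w) \<in> EH\<^sup>* \<and> (w, u) \<in> EH\<^sup>* \<longrightarrow> w \<in> S)"

definition source_component ::
  "nat set \<Rightarrow> (nat \<times> nat) set \<Rightarrow> nat set \<Rightarrow> bool" where
  "source_component N EH S \<longleftrightarrow>
     strongly_connected_component N EH S \<and>
     (\<forall>u v. (u, v) \<in> EH \<and> v \<in> S \<longrightarrow> u \<in> S)"

definition KL :: "'s set \<Rightarrow> ('s \<Rightarrow> real) \<Rightarrow> ('s \<Rightarrow> real) \<Rightarrow> real" where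
  "KL S p q = (\<Sum>w\<in>S. p w * ln (p w / q w))"

definition trim :: "nat \<Rightarrow> real list \<Rightarrow> real list" where
  "trim f xs = take (length xs - 2 * f) (drop f (sort xs))"

text \<open>pl E F f adv L t i a b is the value r_t^i(a,b).
  adv t j i a b: value received by agent i from a faulty agent j in iteration t
  (purporting to be r_{t-1}^j(a,b)); arbitrary, possibly receiver dependent.
  L t i a b: log (l_i(s_{1,t}^i | a) / l_i(s_{1,t}^i | b)).\<close>
fun pl :: "(nat \<times> nat) set \<Rightarrow> nat set \<Rightarrow> nat \<Rightarrow>
    (nat \<Rightarrow> nat \<Rightarrow> nat \<Rightarrow> 'h \<Rightarrow> 'h \<Rightarrow> real) \<Rightarrow>
    (nat \<Rightarrow> nat \<Rightarrow> 'h \<Rightarrow> 'h \<Rightarrow> real) \<Rightarrow> nat \<Rightarrow> nat \<Rightarrow> 'h \<Rightarrow> 'h \<Rightarrow> real" where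
  "pl E F f adv L 0 i a b = 0"
| "pl E F f adv L (Suc t) i a b =
     (let received = map (\<lambda>j. if j \<in> F then adv (Suc t) j i a b else pl E F f adv L t j a b)
                         (sorted_list_of_set (in_nbrs E i));
          kept = trim f received
      in (sum_list kept + pl E F f adv L t i a b) / (real (length kept) + 1)
         + L (Suc t) i a b)"

end

theory Submission
  imports Defs
begin

lemma length_trim: "length (trim f xs) = length xs - 2*f"
  unfolding trim_def by simp

lemma trim_nth: "x \<in> set (trim f xs) \<Longrightarrow> \<exists>p. f \<le> p \<and> p < length xs - f \<and> x = sort xs ! p"
proof -
  assume "x \<in> set (trim f xs)"
  then obtain q where q: "q < length (trim f xs)" "x = trim f xs ! q"
    by (metis in_set_conv_nth)
  show ?thesis
    apply (rule exI[of _ "f + q"])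
    using q unfolding trim_def by auto
qed

lemma count_filter_sort: "length (filter P (sort xs)) = length (filter P xs)"
  by (metis mset_filter mset_sort size_mset)

lemma trim_lower:
  fixes xs :: "real list"
  assumes "length (filter (\<lambda>x. x < m) xs) \<le> f"
  shows "\<forall>x\<in>set (trim f xs). m \<le> x"
proof
  fix x assume "x \<in> set (trim f xs)"
  then obtain p where p: "f \<le> p" "p < length xs - f" "x = sort xs ! p" using trim_nth by blast
  show "m \<le> x"
  proof (rule ccontr)
    assume "\<not> m \<le> x"
    hence lt: "x < m" by simp
    let ?ys = "sort xs"
    have "\<forall>q\<le>p. ?ys ! q < m"
    proof (intro allI impI)
      fix q assume "q \<le> p"
      hence "?ys ! q \<le> ?ys ! p" using p by (intro sorted_nth_mono) auto
      thus "?ys ! q < m" using lt p by simp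
    qed
    hence "{0..p} \<subseteq> {q. q < length ?ys \<and> ?ys ! q < m}" using p by auto
    hence "card {0..p} \<le> card {q. q < length ?ys \<and> ?ys ! q < m}"
      by (intro card_mono) auto
    also have "\<dots> = length (filter (\<lambda>x. x < m) ?ys)" by (simp add: length_filter_conv_card)
    also have "\<dots> = length (filter (\<lambda>x. x < m) xs)" by (rule count_filter_sort)
    finally show False using assms p by simp
  qed
qed

lemma trim_upper_exists:
  fixes xs :: "real list"
  assumes "f + 1 \<le> length (filter (\<lambda>x. a \<le> x) xs)" "2*f < length xs"
  shows "\<exists>x\<in>set (trim f xs). a \<le> x"
proof (rule ccontr)
  assume H: "\<not> (\<exists>x\<in>set (trim f xs). a \<le> x)"
  let ?ys = "sort xs"
  let ?d = "length xs"
  have mem: "?ys ! (?d - f - 1) \<in> set (trim f xs)"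
  proof -
    have "trim f xs ! (?d - 2*f - 1) = ?ys ! (?d - f - 1)"
      unfolding trim_def using assms(2) by (simp add: nth_take nth_drop algebra_simps)
    moreover have "?d - 2*f - 1 < length (trim f xs)" using assms(2) by (simp add: length_trim)
    ultimately show ?thesis by (metis nth_mem)
  qed
  hence lt: "?ys ! (?d - f - 1) < a" using H by force
  have "\<forall>q<?d - f. ?ys ! q < a"
  proof (intro allI impI)
    fix q assume "q < ?d - f"
    hence "?ys ! q \<le> ?ys ! (?d - f - 1)" using assms by (intro sorted_nth_mono) auto
    thus "?ys ! q < a" using lt by simp
  qed
  hence "{q. q < length ?ys \<and> a \<le> ?ys ! q} \<subseteq> {?d - f..<?d}" by (auto simp: not_less[symmetric])
  hence "card {q. q < length ?ys \<and> a \<le> ?ys ! q} \<le> card {?d - f..<?d}"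
    by (intro card_mono) auto
  hence "length (filter (\<lambda>x. a \<le> x) ?ys) \<le> f" by (simp add: length_filter_conv_card)
  thus False using assms(1) count_filter_sort[of "\<lambda>x. a \<le> x" xs] by simp
qed

lemma sum_list_lower:
  fixes xs :: "real list"
  assumes "\<forall>x\<in>set xs. m \<le> x"
  shows "real (length xs) * m \<le> sum_list xs"
  using assms by (induction xs) (auto simp: algebra_simps)

lemma sum_list_lower2:
  fixes xs :: "real list"
  assumes "\<forall>x\<in>set xs. m \<le> x" "y \<in> set xs" "m + h \<le> y"
  shows "real (length xs) * m + h \<le> sum_list xs"
  using assms
proof (induction xs)
  case Nil thus ?case by simp
next
  case (Cons z zs)
  show ?case
  proof (cases "y = z")
    case True
    have "real (length zs) * m \<le> sum_list zs" using Cons.prems by (intro sum_list_lower) auto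
    thus ?thesis using Cons.prems True by (simp add: algebra_simps)
  next
    case False
    hence "real (length zs) * m + h \<le> sum_list zs" using Cons by auto
    thus ?thesis using Cons.prems by (simp add: algebra_simps)
  qed
qed


lemma avg_bound:
  fixes S own m h :: real and K n :: nat
  assumes "real K * m + h \<le> S + own - m" "0 \<le> h" "K + 1 \<le> n"
  shows "m + h / real n \<le> (S + own) / (real K + 1)"
proof -
  have k1: "real K + 1 > 0" by simp
  have A: "m * (real K + 1) + h \<le> S + own" using assms by (simp add: algebra_simps)
  have "(m * (real K + 1) + h) / (real K + 1) \<le> (S + own) / (real K + 1)"
    using A k1 by (intro divide_right_mono) auto
  moreover have "(m * (real K + 1) + h) / (real K + 1) = m + h / real (K+1)"
    using k1 by (simp add: add_divide_distrib)
  ultimately have "m + h / real (K+1) \<le> (S + own) / (real K + 1)" by simp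
  moreover have "h / real n \<le> h / real (K+1)"
    using assms by (intro divide_left_mono) auto
  ultimately show ?thesis by simp
qed

lemma one_step:
  fixes m h :: real
  assumes E_sub: "E \<subseteq> {..<n} \<times> {..<n}" and irr: "\<forall>i. (i,i)\<notin>E"
    and finF: "finite F" and Fc: "card F \<le> f"
    and j: "j \<in> {..<n} - F"
    and lb: "\<forall>u\<in>{..<n} - F. m \<le> pl E F f adv L t u a b"
    and h: "0 \<le> h"
    and boost: "m + h \<le> pl E F f adv L t j a b \<or>
       (2*f < card (in_nbrs E j) \<and>
        f+1 \<le> card {u\<in>{..<n}-F. (u,j)\<in>E \<and> m + h \<le> pl E F f adv L t u a b})"
  shows "m + h / real n + L (Suc t) j a b \<le> pl E F f adv L (Suc t) j a b"
proof -
  define I where "I = in_nbrs E j"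
  define l where "l = sorted_list_of_set I"
  define g where "g u = (if u \<in> F then adv (Suc t) u j a b else pl E F f adv L t u a b)" for u
  define xs where "xs = map g l"
  define kept where "kept = trim f xs"
  define own where "own = pl E F f adv L t j a b"
  have I_sub: "I \<subseteq> {..<n} - {j}" using E_sub irr unfolding I_def in_nbrs_def by auto
  have finI: "finite I" using I_sub finite_subset by blast
  have setl: "set l = I" and dl: "distinct l" using finI unfolding l_def by auto
  have lenxs: "length xs = card I" unfolding xs_def using dl setl distinct_card by fastforce
  have cardI: "card I \<le> n - 1"
  proof -
    have "card I \<le> card ({..<n} - {j})" using I_sub by (intro card_mono) auto
    thus ?thesis using j by simp
  qed
  have K: "length kept + 1 \<le> n" unfolding kept_def length_trim lenxs using cardI j by auto
  have val: "pl E F f adv L (Suc t) j a b = (sum_list kept + own) / (real (length kept) + 1) + L (Suc t) j a b"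
    unfolding kept_def xs_def l_def g_def own_def I_def by (simp add: Let_def)
  have lowcount: "length (filter (\<lambda>x. x < m) xs) \<le> f"
  proof -
    have "length (filter (\<lambda>x. x < m) xs) = length (filter (\<lambda>u. g u < m) l)"
      unfolding xs_def by (simp add: filter_map comp_def)
    also have "\<dots> = card ({u. g u < m} \<inter> I)" using dl setl by (simp add: distinct_length_filter)
    also have "\<dots> \<le> card F"
    proof (intro card_mono finF)
      show "{u. g u < m} \<inter> I \<subseteq> F"
      proof
        fix u assume u: "u \<in> {u. g u < m} \<inter> I"
        show "u \<in> F"
        proof (rule ccontr)
          assume "u \<notin> F"
          hence "u \<in> {..<n} - F" using u I_sub by auto
          hence "m \<le> g u" using lb \<open>u \<notin> F\<close> unfolding g_def by auto
          thus False using u by auto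
        qed
      qed
    qed
    finally show ?thesis using Fc by simp
  qed
  have allk: "\<forall>x\<in>set kept. m \<le> x" unfolding kept_def by (rule trim_lower[OF lowcount])
  have ownm: "m \<le> own" using lb j unfolding own_def by auto
  have key: "real (length kept) * m + h \<le> sum_list kept + own - m"
  proof (cases "m + h \<le> own")
    case True
    have "real (length kept) * m \<le> sum_list kept" by (rule sum_list_lower[OF allk])
    thus ?thesis using True by simp
  next
    case False
    hence B: "2*f < card I" "f+1 \<le> card {u\<in>{..<n}-F. (u,j)\<in>E \<and> m + h \<le> pl E F f adv L t u a b}"
      using boost unfolding own_def I_def by auto
    have "card {u\<in>{..<n}-F. (u,j)\<in>E \<and> m + h \<le> pl E F f adv L t u a b} \<le> card ({u. m + h \<le> g u} \<inter> I)"
      using finI by (intro card_mono) (auto simp: g_def I_def in_nbrs_def)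
    also have "\<dots> = length (filter (\<lambda>u. m + h \<le> g u) l)" using dl setl by (simp add: distinct_length_filter)
    also have "\<dots> = length (filter (\<lambda>x. m + h \<le> x) xs)" unfolding xs_def by (simp add: filter_map comp_def)
    finally have "f + 1 \<le> length (filter (\<lambda>x. m + h \<le> x) xs)" using B by simp
    then obtain y where y: "y \<in> set kept" "m + h \<le> y"
      using trim_upper_exists[of f "m+h" xs] B lenxs unfolding kept_def by auto
    have "real (length kept) * m + h \<le> sum_list kept" by (rule sum_list_lower2[OF allk y])
    thus ?thesis using ownm by simp
  qed
  have "m + h / real n \<le> (sum_list kept + own) / (real (length kept) + 1)"
    by (rule avg_bound[OF key h K])
  thus ?thesis using val by simp
qed


context
  fixes E :: "(nat \<times> nat) set" and F :: "nat set" and f :: nat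
    and adv :: "nat \<Rightarrow> nat \<Rightarrow> nat \<Rightarrow> 'h \<Rightarrow> 'h \<Rightarrow> real"
    and L :: "nat \<Rightarrow> nat \<Rightarrow> 'h \<Rightarrow> 'h \<Rightarrow> real"
    and a b :: 'h and n :: nat and P :: "nat set" and c :: real and T :: nat
  assumes E_sub: "E \<subseteq> {..<n} \<times> {..<n}" and irr: "\<forall>i. (i,i)\<notin>E"
    and finF: "finite F" and Fc: "card F \<le> f"
    and Nne: "{..<n} - F \<noteq> {}"
    and spread: "\<forall>S \<subseteq> {..<n} - F. S \<noteq> {} \<longrightarrow> S \<inter> P = {} \<longrightarrow>
                   (\<exists>j\<in>S. f+1 \<le> card {u\<in>{..<n}-F-S. (u,j)\<in>E})"
    and small: "\<forall>j\<in>{..<n}-F. card (in_nbrs E j) \<le> 2*f \<longrightarrow> j \<in> P"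
    and cpos: "c > 0"
    and growth: "\<forall>t\<ge>T. \<forall>j\<in>{..<n}-F. - (c / (4 * real n ^ (n+1))) * real t \<le> L t j a b
                    \<and> (j \<in> P \<longrightarrow> c * real t \<le> L t j a b)"
begin

lemma npos: "0 < n" using Nne by auto

lemma window_induct:
  assumes s: "T \<le> s" and lb: "\<forall>u\<in>{..<n}-F. m \<le> pl E F f adv L s u a b"
  defines "\<epsilon> \<equiv> c / (4 * real n ^ (n+1))"
  shows "k \<le> n \<Longrightarrow> (\<forall>u\<in>{..<n}-F. m - \<epsilon> * real k * real (s+k) \<le> pl E F f adv L (s+k) u a b) \<and>
      ({u\<in>{..<n}-F. m - \<epsilon> * real k * real (s+k) + c * real s / real n ^ k \<le> pl E F f adv L (s+k) u a b} = {..<n}-F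
       \<or> k \<le> card {u\<in>{..<n}-F. m - \<epsilon> * real k * real (s+k) + c * real s / real n ^ k \<le> pl E F f adv L (s+k) u a b})"
proof (induction k)
  case 0
  thus ?case using lb by simp
next
  case (Suc k)
  define N where "N = {..<n} - F"
  define r where "r t u = pl E F f adv L t u a b" for t u
  define D where "D k = \<epsilon> * real k * real (s+k)" for k
  define hk where "hk k = c * real s / real n ^ k" for k
  define B where "B k = {u\<in>N. m - D k + hk k \<le> r (s+k) u}" for k
  have IH: "\<forall>u\<in>N. m - D k \<le> r (s+k) u" "B k = N \<or> k \<le> card (B k)"
    using Suc by (auto simp: N_def r_def D_def hk_def B_def)
  have epos: "0 < \<epsilon>" using cpos npos unfolding \<epsilon>_def by simp
  have Dstep: "D k + \<epsilon> * real (s + k + 1) \<le> D (Suc k)"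
    unfolding D_def using epos by (simp add: algebra_simps)
  have Dmono: "D k \<le> D (Suc k)"
  proof -
    have "0 \<le> \<epsilon> * real (s + k + 1)" using epos by simp
    thus ?thesis using Dstep by linarith
  qed
  have hk_step: "hk k / real n = hk (Suc k)" unfolding hk_def by simp
  have hk_nn: "0 \<le> hk k" for k unfolding hk_def using cpos by simp
  have hk_le: "hk (Suc k) \<le> c * real (s + k + 1)"
  proof -
    have "1 \<le> real n" using npos by simp
    hence n1: "1 \<le> real n ^ Suc k" by (rule one_le_power)
    have cs: "0 \<le> c * real s" using cpos by simp
    have "c * real s / real n ^ Suc k \<le> c * real s / 1"
      using cs n1 by (intro divide_left_mono) auto
    hence "hk (Suc k) \<le> c * real s" unfolding hk_def by simp
    also have "\<dots> \<le> c * real (s + k + 1)" using cpos by simp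
    finally show ?thesis .
  qed
  have gr: "\<forall>j\<in>N. - \<epsilon> * real (s+k+1) \<le> L (Suc (s+k)) j a b \<and> (j \<in> P \<longrightarrow> c * real (s+k+1) \<le> L (Suc (s+k)) j a b)"
  proof -
    have "T \<le> Suc (s+k)" using s by simp
    hence "\<forall>j\<in>N. - \<epsilon> * real (Suc (s+k)) \<le> L (Suc (s+k)) j a b \<and> (j \<in> P \<longrightarrow> c * real (Suc (s+k)) \<le> L (Suc (s+k)) j a b)"
      using growth unfolding N_def \<epsilon>_def by blast
    moreover have "real (Suc (s+k)) = real (s+k+1)" by simp
    ultimately show ?thesis by metis
  qed
  have os: "m - D k + h / real n + L (Suc (s+k)) j a b \<le> r (Suc (s+k)) j"
    if "j \<in> N" "0 \<le> h" "m - D k + h \<le> r (s+k) j \<or> (2*f < card (in_nbrs E j) \<and>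
        f+1 \<le> card {u\<in>N. (u,j)\<in>E \<and> m - D k + h \<le> r (s+k) u})" for j h
    using one_step[OF E_sub irr finF Fc, of j "m - D k" adv L "s+k" a b h] that IH(1)
    unfolding N_def r_def by blast
  have low: "\<forall>u\<in>N. m - D (Suc k) \<le> r (s + Suc k) u"
  proof
    fix u assume u: "u \<in> N"
    have "m - D k + 0 / real n + L (Suc (s+k)) u a b \<le> r (Suc (s+k)) u"
      using os[OF u, of 0] IH(1) u by simp
    thus "m - D (Suc k) \<le> r (s + Suc k) u" using gr u Dstep by force
  qed
  have stay: "B k \<subseteq> B (Suc k)"
  proof
    fix u assume u: "u \<in> B k"
    hence uN: "u \<in> N" and ub: "m - D k + hk k \<le> r (s+k) u" unfolding B_def by auto
    have "m - D k + hk k / real n + L (Suc (s+k)) u a b \<le> r (Suc (s+k)) u"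
      using os[OF uN hk_nn] ub by blast
    hence "m - D (Suc k) + hk (Suc k) \<le> r (s + Suc k) u" using gr uN Dstep hk_step by force
    thus "u \<in> B (Suc k)" unfolding B_def using uN by simp
  qed
  have Pin: "u \<in> B (Suc k)" if "u \<in> P" "u \<in> N" for u
  proof -
    have "m - D k + 0 / real n + L (Suc (s+k)) u a b \<le> r (Suc (s+k)) u"
      using os[OF that(2), of 0] IH(1) that by simp
    hence "m - D k + c * real (s+k+1) \<le> r (s + Suc k) u" using gr that by force
    hence "m - D (Suc k) + hk (Suc k) \<le> r (s + Suc k) u" using Dmono hk_le by linarith
    thus ?thesis unfolding B_def using that by simp
  qed
  have grow: "B k \<noteq> N \<Longrightarrow> \<exists>j\<in>B (Suc k). j \<notin> B k"
  proof -
    assume ne: "B k \<noteq> N"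
    have BN: "B k \<subseteq> N" unfolding B_def by auto
    define S where "S = N - B k"
    have Sne: "S \<noteq> {}" "S \<subseteq> N" using ne BN unfolding S_def by auto
    show ?thesis
    proof (cases "S \<inter> P = {}")
      case False
      then obtain j where "j \<in> S" "j \<in> P" by blast
      thus ?thesis using Pin unfolding S_def by blast
    next
      case True
      then obtain j where j: "j \<in> S" "f+1 \<le> card {u\<in>N-S. (u,j)\<in>E}"
        using spread Sne unfolding N_def by blast
      have jN: "j \<in> N" and jP: "j \<notin> P" using j True Sne by auto
      have d: "2*f < card (in_nbrs E j)" using small jN jP unfolding N_def by force
      have NS: "N - S = B k" using BN unfolding S_def by auto
      have "card {u\<in>N-S. (u,j)\<in>E} \<le> card {u\<in>N. (u,j)\<in>E \<and> m - D k + hk k \<le> r (s+k) u}"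
        unfolding NS B_def by (intro card_mono) (auto simp: N_def)
      hence "m - D k + hk k / real n + L (Suc (s+k)) j a b \<le> r (Suc (s+k)) j"
        using os[OF jN hk_nn] d j(2) by auto
      hence "m - D (Suc k) + hk (Suc k) \<le> r (s + Suc k) j" using gr jN Dstep hk_step by force
      hence "j \<in> B (Suc k)" unfolding B_def using jN by simp
      moreover have "j \<notin> B k" using j(1) unfolding S_def by auto
      ultimately show ?thesis by blast
    qed
  qed
  have BN1: "B (Suc k) \<subseteq> N" unfolding B_def by auto
  have finN: "finite N" unfolding N_def by simp
  have card2: "B (Suc k) = N \<or> Suc k \<le> card (B (Suc k))"
  proof (cases "B k = N")
    case True thus ?thesis using stay BN1 by auto
  next
    case False
    then obtain j where j: "j \<in> B (Suc k)" "j \<notin> B k" using grow by blast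
    have "B k \<subset> B (Suc k)" using stay j by blast
    hence "card (B k) < card (B (Suc k))" using finN BN1 by (meson finite_subset psubset_card_mono)
    thus ?thesis using IH(2) False by simp
  qed
  show ?case using low card2 unfolding N_def r_def D_def hk_def B_def by simp
qed


lemma window:
  assumes s: "T \<le> s" "n \<le> s" and lb: "\<forall>u\<in>{..<n}-F. m \<le> pl E F f adv L s u a b"
  shows "\<forall>u\<in>{..<n}-F. m + c / (2 * real n ^ n) \<le> pl E F f adv L (s+n) u a b"
proof
  fix u assume u: "u \<in> {..<n}-F"
  define \<epsilon> where "\<epsilon> = c / (4 * real n ^ (n+1))"
  define N where "N = {..<n} - F"
  define B where "B = {u\<in>N. m - \<epsilon> * real n * real (s+n) + c * real s / real n ^ n \<le> pl E F f adv L (s+n) u a b}"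
  have W: "B = N \<or> n \<le> card B"
    using window_induct[OF s(1) lb, of n] unfolding B_def N_def \<epsilon>_def by simp
  have BN: "B \<subseteq> N" unfolding B_def by auto
  have "card N \<le> n" unfolding N_def by (metis card_Diff_subset_Int card_lessThan diff_le_self finite_Int finite_lessThan finite_subset inf_le1 card_mono Diff_subset)
  moreover have finN: "finite N" unfolding N_def by simp
  ultimately have "B = N"
  proof -
    assume cN: "card N \<le> n" and fN: "finite N"
    show "B = N"
    proof (cases "B = N")
      case False
      hence "n \<le> card B" using W by simp
      moreover have "card B \<le> card N" using BN fN by (rule card_mono[rotated])
      ultimately have "card B = card N" using cN by simp
      thus ?thesis using card_subset_eq[OF fN BN] by simp
    qed
  qed
  hence ub: "m - \<epsilon> * real n * real (s+n) + c * real s / real n ^ n \<le> pl E F f adv L (s+n) u a b"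
    using u unfolding B_def N_def by blast
  have np: "0 < real n" using npos by simp
  have pn: "0 < real n ^ n" using np by simp
  have e1: "\<epsilon> * real n * real (s+n) \<le> c * real s / (2 * real n ^ n)"
  proof -
    have "\<epsilon> * real n = c / (4 * real n ^ n)" unfolding \<epsilon>_def using np by (simp add: field_simps)
    hence "\<epsilon> * real n * real (s+n) = c * real (s+n) / (4 * real n ^ n)" by simp
    also have "\<dots> \<le> c * (2 * real s) / (4 * real n ^ n)"
      using s cpos pn by (intro divide_right_mono mult_left_mono) auto
    also have "\<dots> = c * real s / (2 * real n ^ n)" by simp
    finally show ?thesis .
  qed
  have e2: "c / (2 * real n ^ n) \<le> c * real s / (2 * real n ^ n) "
  proof -
    have "1 \<le> real s" using s npos by simp
    hence "c * 1 \<le> c * real s" using cpos by (intro mult_left_mono) auto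
    thus ?thesis using pn by (intro divide_right_mono) auto
  qed
  have "c * real s / real n ^ n = 2 * (c * real s / (2 * real n ^ n))" by simp
  thus "m + c / (2 * real n ^ n) \<le> pl E F f adv L (s+n) u a b" using ub e1 e2 by linarith
qed

lemma diverge:
  assumes i: "i \<in> {..<n} - F"
  shows "filterlim (\<lambda>t. pl E F f adv L t i a b) at_top sequentially"
proof -
  define N where "N = {..<n} - F"
  define T' where "T' = max T n"
  define \<gamma> where "\<gamma> = c / (2 * real n ^ n)"
  have gpos: "0 < \<gamma>" unfolding \<gamma>_def using cpos npos by simp
  define M0 where "M0 = Min ((\<lambda>(s,u). pl E F f adv L s u a b) ` ({T'..<T'+n} \<times> N))"
  have finA: "finite ({T'..<T'+n} \<times> N)" unfolding N_def by simp
  have M0le: "M0 \<le> pl E F f adv L s u a b" if "s \<in> {T'..<T'+n}" "u \<in> N" for s u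
    unfolding M0_def using finA that by (intro Min_le) auto
  have ind: "\<forall>s\<in>{T'..<T'+n}. \<forall>u\<in>N. M0 + real q * \<gamma> \<le> pl E F f adv L (s + q * n) u a b" for q
  proof (induction q)
    case 0 thus ?case using M0le by simp
  next
    case (Suc q)
    show ?case
    proof (intro ballI)
      fix s u assume s: "s \<in> {T'..<T'+n}" and u: "u \<in> N"
      have "T \<le> s + q*n" "n \<le> s + q*n" using s unfolding T'_def by auto
      from window[OF this, of "M0 + real q * \<gamma>"] Suc s u
      have "M0 + real q * \<gamma> + \<gamma> \<le> pl E F f adv L (s + q*n + n) u a b"
        unfolding N_def \<gamma>_def by blast
      thus "M0 + real (Suc q) * \<gamma> \<le> pl E F f adv L (s + Suc q * n) u a b"
        by (simp add: algebra_simps)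
    qed
  qed
  have bound: "M0 + real ((t - T') div n) * \<gamma> \<le> pl E F f adv L t i a b" if t: "T' \<le> t" for t
  proof -
    define s where "s = T' + (t - T') mod n"
    define q where "q = (t - T') div n"
    have "s \<in> {T'..<T'+n}" unfolding s_def using npos by simp
    moreover have "t = s + q * n" unfolding s_def q_def using t by simp
    ultimately show ?thesis using ind[of q] i unfolding N_def q_def by metis
  qed
  show ?thesis
  proof (subst filterlim_at_top, intro allI)
    fix Z :: real
    define q0 where "q0 = nat \<lceil>(Z - M0) / \<gamma>\<rceil>"
    have q0: "Z \<le> M0 + real q0 * \<gamma>"
    proof -
      have "(Z - M0) / \<gamma> \<le> real q0" unfolding q0_def by linarith
      thus ?thesis using gpos by (simp add: divide_le_eq algebra_simps)
    qed
    show "eventually (\<lambda>t. Z \<le> pl E F f adv L t i a b) sequentially"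
      unfolding eventually_sequentially
    proof (intro exI allI impI)
      fix t assume t: "T' + q0 * n \<le> t"
      have "q0 \<le> (t - T') div n" using t npos
        by (metis add_diff_cancel_left' diff_le_mono div_le_mono nonzero_mult_div_cancel_right not_gr0)
      hence "real q0 * \<gamma> \<le> real ((t - T') div n) * \<gamma>" using gpos by (intro mult_right_mono) auto
      thus "Z \<le> pl E F f adv L t i a b" using bound[of t] t q0 by linarith
    qed
  qed
qed

end

lemma sort_neg: "sort (map uminus (xs :: real list)) = map uminus (rev (sort xs))"
proof (rule properties_for_sort)
  show "mset (map uminus (rev (sort xs))) = mset (map uminus xs)"
    by (simp add: mset_map)
  show "sorted (map uminus (rev (sort xs)))"
    by (simp add: sorted_map sorted_rev_iff_nth_mono sorted_iff_nth_mono rev_nth) (auto intro: sorted_nth_mono)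
qed

lemma trim_neg: "sum_list (trim f (map uminus (xs :: real list))) = - sum_list (trim f xs)"
proof -
  define ys where "ys = sort xs"
  define d where "d = length xs"
  have ly: "length ys = d" unfolding ys_def d_def by simp
  have "trim f (map uminus xs) = map uminus (take (d - 2*f) (drop f (rev ys)))"
    unfolding trim_def sort_neg ys_def d_def by (simp add: take_map drop_map)
  also have "take (d - 2*f) (drop f (rev ys)) = rev (take (d - 2*f) (drop f ys))"
  proof (cases "2*f \<le> d")
    case False thus ?thesis by simp
  next
    case True
    have "drop f (rev ys) = rev (take (d - f) ys)" using ly by (simp add: drop_rev)
    hence "take (d - 2*f) (drop f (rev ys)) = rev (drop (length (take (d - f) ys) - (d - 2*f)) (take (d - f) ys))"
      by (simp add: take_rev)
    also have "length (take (d - f) ys) - (d - 2*f) = f" using ly True by simp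
    also have "drop f (take (d - f) ys) = take (d - 2*f) (drop f ys)"
      using True by (simp add: take_drop)
    finally show ?thesis .
  qed
  finally have "trim f (map uminus xs) = map uminus (rev (trim f xs))"
    unfolding trim_def ys_def d_def by simp
  moreover have "sum_list (map uminus zs) = - sum_list zs" for zs :: "real list"
    by (induction zs) auto
  ultimately show ?thesis by (simp add: sum_list_rev)
qed

lemma pl_neg:
  "pl E F f adv L t i a b =
   - pl E F f (\<lambda>t j i a b. - adv t j i b a) (\<lambda>t j a b. - L t j b a) t i b a"
proof (induction t arbitrary: i)
  case 0 thus ?case by simp
next
  case (Suc t)
  define adv' where "adv' = (\<lambda>t j i a b. - adv t j i b a)"
  define L' where "L' = (\<lambda>t j (a::'a) (b::'a). - L t j b a)"
  define g where "g j = (if j \<in> F then adv (Suc t) j i a b else pl E F f adv L t j a b)" for j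
  define g' where "g' j = (if j \<in> F then adv' (Suc t) j i b a else pl E F f adv' L' t j b a)" for j
  have gg: "g' = (\<lambda>j. - g j)" using Suc unfolding g_def g'_def adv'_def L'_def by (auto simp: fun_eq_iff)
  define xs where "xs = map g (sorted_list_of_set (in_nbrs E i))"
  have xs': "map g' (sorted_list_of_set (in_nbrs E i)) = map uminus xs"
    unfolding xs_def gg by simp
  have v: "pl E F f adv L (Suc t) i a b = (sum_list (trim f xs) + pl E F f adv L t i a b) / (real (length (trim f xs)) + 1) + L (Suc t) i a b"
    unfolding xs_def g_def by (simp add: Let_def)
  have v': "pl E F f adv' L' (Suc t) i b a = (sum_list (trim f (map uminus xs)) + pl E F f adv' L' t i b a) / (real (length (trim f (map uminus xs))) + 1) + L' (Suc t) i b a"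
    unfolding xs'[symmetric] g'_def by (simp add: Let_def)
  show ?case unfolding v v'[unfolded adv'_def L'_def] trim_neg length_trim
    using Suc[of i] by (simp add: L'_def adv'_def field_simps)
qed


lemma (in prob_space) slln_pair:
  fixes Y :: "nat \<times> nat \<Rightarrow> 'a \<Rightarrow> 's" and Sx :: "nat \<Rightarrow> 's set" and g :: "'s \<Rightarrow> real"
  assumes indep: "indep_vars (\<lambda>ti. count_space (Sx (snd ti))) Y ({1..} \<times> V)"
    and j: "j \<in> V" and finS: "finite (Sx j)" and Sne: "Sx j \<noteq> {}"
    and distr: "\<forall>k\<ge>1. \<forall>w\<in>Sx j. prob {\<omega>\<in>space M. Y (k,j) \<omega> = w} = p w"
    and \<delta>: "0 < \<delta>"
  shows "AE \<omega> in M. eventually (\<lambda>t. \<bar>(\<Sum>k=1..t. g (Y (k,j) \<omega>)) - real t * (\<Sum>w\<in>Sx j. p w * g w)\<bar> < \<delta> * real t) sequentially"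
proof -
  define \<mu> where "\<mu> = (\<Sum>w\<in>Sx j. p w * g w)"
  define X where "X i \<omega> = g (Y i \<omega>)" for i \<omega>
  define lo where "lo = Min (g ` Sx j)"
  define hi where "hi = Max (g ` Sx j) + 1"
  obtain w0 where w0: "w0 \<in> Sx j" using Sne by blast
  have "lo \<le> g w0" unfolding lo_def using finS w0 by (intro Min_le) auto
  moreover have "g w0 \<le> Max (g ` Sx j)" using finS w0 by (intro Max_ge) auto
  ultimately have lohi: "lo < hi" unfolding hi_def by linarith
  have rvY: "random_variable (count_space (Sx j)) (Y (k,j))" if "1 \<le> k" for k
  proof -
    have "\<forall>i\<in>{1..} \<times> V. random_variable (count_space (Sx (snd i))) (Y i)"
      using indep unfolding indep_vars_def2 by (rule conjunct1)
    thus ?thesis using j that by force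
  qed
  have Yin: "Y (k,j) \<omega> \<in> Sx j" if "1 \<le> k" "\<omega> \<in> space M" for k \<omega>
    using measurable_space[OF rvY[OF that(1)] that(2)] by simp
  have indX: "indep_vars (\<lambda>_. borel) X ({1..} \<times> V)"
    unfolding X_def by (rule indep_vars_compose2[OF indep]) auto
  have bnd: "X (k,j) \<omega> \<in> {lo..hi}" if "1 \<le> k" "\<omega> \<in> space M" for k \<omega>
  proof -
    have "g (Y (k,j) \<omega>) \<in> g ` Sx j" using Yin[OF that] by simp
    hence "lo \<le> g (Y (k,j) \<omega>)" "g (Y (k,j) \<omega>) \<le> Max (g ` Sx j)"
      unfolding lo_def using finS by (auto intro: Min_le Max_ge)
    thus ?thesis unfolding X_def hi_def by simp
  qed
  have expX: "expectation (X (k,j)) = \<mu>" if k: "1 \<le> k" for k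
  proof -
    define A where "A w = {\<omega>\<in>space M. Y (k,j) \<omega> = w}" for w
    have Asets: "A w \<in> events" for w
    proof -
      have "A w = Y (k,j) -` {w} \<inter> space M" unfolding A_def by auto
      moreover have "Y (k,j) -` ({w} \<inter> Sx j) \<inter> space M \<in> events"
        using rvY[OF k] by (intro measurable_sets) auto
      moreover have "Y (k,j) -` ({w} \<inter> Sx j) \<inter> space M = Y (k,j) -` {w} \<inter> space M"
        using Yin[OF k] by auto
      ultimately show ?thesis by simp
    qed
    have eq: "X (k,j) \<omega> = (\<Sum>w\<in>Sx j. g w * indicator (A w) \<omega>)" if "\<omega> \<in> space M" for \<omega>
    proof -
      have "(\<Sum>w\<in>Sx j. g w * indicator (A w) \<omega>) = (\<Sum>w\<in>{Y (k,j) \<omega>}. g w * indicator (A w) \<omega>)"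
        using Yin[OF k that] finS by (intro sum.mono_neutral_right) (auto simp: A_def indicator_def)
      thus ?thesis using that unfolding X_def by (simp add: A_def)
    qed
    have "expectation (X (k,j)) = expectation (\<lambda>\<omega>. \<Sum>w\<in>Sx j. g w * indicator (A w) \<omega>)"
      by (rule Bochner_Integration.integral_cong[OF refl eq])
    also have "\<dots> = (\<Sum>w\<in>Sx j. expectation (\<lambda>\<omega>. g w * indicator (A w) \<omega>))"
      by (rule Bochner_Integration.integral_sum) (auto intro!: integrable_mult_right integrable_real_indicator Asets simp: emeasure_eq_measure)
    also have "\<dots> = (\<Sum>w\<in>Sx j. g w * prob (A w))"
      using Asets by (simp add: sets.Int_space_eq2)
    also have "\<dots> = \<mu>" unfolding \<mu>_def A_def using distr k by (intro sum.cong) auto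
    finally show ?thesis .
  qed
  define B where "B t = {\<omega>\<in>space M. \<delta> * real t \<le> \<bar>(\<Sum>i\<in>{1..t}\<times>{j}. X i \<omega>) - real t * \<mu>\<bar>}" for t
  define c where "c = 2 * \<delta>\<^sup>2 / (hi - lo)\<^sup>2"
  have cpos: "0 < c" unfolding c_def using \<delta> lohi by simp
  have Bprob: "prob (B t) \<le> 2 * exp (- c) ^ t" for t
  proof (cases "t = 0")
    case True
    have "prob (B t) \<le> 1" by (rule prob_le_1)
    moreover have "2 * exp (- c) ^ t = 2" using True by simp
    ultimately show ?thesis by linarith
  next
    case False
    define I where "I = {1..t} \<times> {j}"
    have I_sub: "I \<subseteq> {1..} \<times> V" unfolding I_def using j by auto
    interpret H: Hoeffding_ineq M I X "\<lambda>_. lo" "\<lambda>_. hi" "real t * \<mu>"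
    proof unfold_locales
      show "finite I" unfolding I_def by simp
      show "indep_vars (\<lambda>_. borel) X I" by (rule indep_vars_subset[OF indX I_sub])
      show "AE x in M. X i x \<in> {lo..hi}" if "i \<in> I" for i
        using that bnd unfolding I_def by (auto intro!: AE_I2)
      show "real t * \<mu> \<equiv> \<Sum>i\<in>I. expectation (X i)"
      proof -
        have "(\<Sum>i\<in>I. expectation (X i)) = (\<Sum>i\<in>I. \<mu>)"
          using expX unfolding I_def by (intro sum.cong) auto
        also have "\<dots> = real t * \<mu>" unfolding I_def by simp
        finally show "real t * \<mu> \<equiv> \<Sum>i\<in>I. expectation (X i)" by simp
      qed
    qed
    have pos: "(\<Sum>i\<in>I. (hi - lo)\<^sup>2) > 0" using lohi False unfolding I_def by simp
    have "prob (B t) \<le> 2 * exp (-2 * (\<delta> * real t)\<^sup>2 / (\<Sum>i\<in>I. (hi - lo)\<^sup>2))"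
      using H.Hoeffding_ineq_abs_ge[of "\<delta> * real t", OF _ pos] \<delta> unfolding B_def I_def by simp
    also have "-2 * (\<delta> * real t)\<^sup>2 / (\<Sum>i\<in>I. (hi - lo)\<^sup>2) = real t * (- c)"
    proof -
      define D where "D = (hi - lo)\<^sup>2"
      have D: "0 < D" unfolding D_def using lohi by simp
      have sI: "(\<Sum>i\<in>I. (hi - lo)\<^sup>2) = real t * D" unfolding I_def D_def by simp
      have tp: "0 < real t" using False by simp
      have cI: "card I = t" unfolding I_def by simp
      show ?thesis unfolding sI c_def D_def[symmetric] using D tp
        by (simp add: power2_eq_square field_simps cI)
    qed
    also have "exp (real t * (- c)) = exp (- c) ^ t" by (rule exp_of_nat_mult)
    finally show ?thesis .
  qed
  have Bmeas: "B t \<in> events" for t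
  proof -
    have "(\<lambda>\<omega>. (\<Sum>i\<in>{1..t}\<times>{j}. X i \<omega>)) \<in> borel_measurable M"
      using indX j by (intro borel_measurable_sum) (auto simp: indep_vars_def)
    thus ?thesis unfolding B_def by measurable
  qed
  have summ: "summable (\<lambda>t. measure M (B t))"
  proof (rule summable_comparison_test)
    show "\<exists>N. \<forall>t\<ge>N. norm (measure M (B t)) \<le> 2 * exp (- c) ^ t" using Bprob by auto
    show "summable (\<lambda>t. 2 * exp (- c) ^ t)" using cpos by (intro summable_mult summable_geometric) auto
  qed
  have "AE \<omega> in M. eventually (\<lambda>t. \<omega> \<in> space M - B t) sequentially"
    by (rule borel_cantelli_AE1[OF Bmeas]) (auto simp: summ less_top[symmetric])
  thus ?thesis
  proof (rule AE_mp, intro AE_I2 impI)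
    fix \<omega> assume "\<omega> \<in> space M" and ev: "eventually (\<lambda>t. \<omega> \<in> space M - B t) sequentially"
    show "eventually (\<lambda>t. \<bar>(\<Sum>k=1..t. g (Y (k,j) \<omega>)) - real t * (\<Sum>w\<in>Sx j. p w * g w)\<bar> < \<delta> * real t) sequentially"
    proof (rule eventually_mono[OF ev])
      fix t assume "\<omega> \<in> space M - B t"
      moreover have "(\<Sum>i\<in>{1..t}\<times>{j}. X i \<omega>) = (\<Sum>k=1..t. g (Y (k,j) \<omega>))"
      proof -
        have "{1..t}\<times>{j} = (\<lambda>k. (k,j)) ` {1..t}" by auto
        moreover have "inj_on (\<lambda>k. (k,j)) {1..t}" by (auto simp: inj_on_def)
        ultimately show ?thesis unfolding X_def by (simp add: sum.reindex)
      qed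
      ultimately show "\<bar>(\<Sum>k=1..t. g (Y (k,j) \<omega>)) - real t * (\<Sum>w\<in>Sx j. p w * g w)\<bar> < \<delta> * real t"
        unfolding B_def \<mu>_def by auto
    qed
  qed
qed


lemma source_exists:
  assumes EH: "EH \<subseteq> N \<times> N" and finN: "finite N" and S: "S \<subseteq> N" "S \<noteq> {}"
    and closed: "\<forall>u v. (u,v)\<in>EH \<and> v\<in>S \<longrightarrow> u\<in>S"
  shows "\<exists>C\<subseteq>S. source_component N EH C"
proof -
  define anc where "anc v = {u. (u,v) \<in> EH\<^sup>* }" for v
  have anc_S: "anc v \<subseteq> S" if "v \<in> S" for v
  proof
    fix u assume "u \<in> anc v"
    hence "(u,v) \<in> EH\<^sup>*" unfolding anc_def by simp
    thus "u \<in> S" using that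
    proof (induction rule: converse_rtrancl_induct)
      case base thus ?case by simp
    next
      case (step y z) thus ?case using closed by blast
    qed
  qed
  have fin_anc: "finite (anc v)" if "v \<in> S" for v
    by (rule finite_subset[OF anc_S[OF that] finite_subset[OF S(1) finN]])
  obtain j0 where "j0 \<in> S" using S(2) by blast
  then obtain j where j: "j \<in> S" and jmin: "\<forall>v. v \<in> S \<longrightarrow> card (anc j) \<le> card (anc v)"
    using ex_has_least_nat[of "\<lambda>v. v \<in> S" j0 "\<lambda>v. card (anc v)"] by blast
  define C where "C = {u. (u,j) \<in> EH\<^sup>* \<and> (j,u) \<in> EH\<^sup>* }"
  have bk: "(j,u) \<in> EH\<^sup>*" if hu: "(u,j) \<in> EH\<^sup>*" for u
  proof -
    have uS: "u \<in> S" using anc_S[OF j] hu unfolding anc_def by auto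
    have sub: "anc u \<subseteq> anc j" using hu unfolding anc_def by (auto intro: rtrancl_trans)
    have "card (anc j) \<le> card (anc u)" using jmin uS by blast
    hence "anc u = anc j" using sub fin_anc[OF j] by (metis card_seteq)
    moreover have "j \<in> anc j" unfolding anc_def by simp
    ultimately have "j \<in> anc u" by simp
    thus ?thesis unfolding anc_def by simp
  qed
  have CS: "C \<subseteq> S" using anc_S[OF j] unfolding C_def anc_def by auto
  have "source_component N EH C"
    unfolding source_component_def strongly_connected_component_def
  proof (intro conjI allI impI ballI)
    show "C \<noteq> {}" unfolding C_def by auto
    show "C \<subseteq> N" using CS S by auto
  next
    fix u v assume "u \<in> C" "v \<in> C"
    hence "(u,j) \<in> EH\<^sup>*" "(j,v) \<in> EH\<^sup>*" unfolding C_def by auto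
    thus "(u,v) \<in> EH\<^sup>*" by (rule rtrancl_trans)
  next
    fix w u assume "w \<in> N" "u \<in> C" and H: "(u, w) \<in> EH\<^sup>* \<and> (w, u) \<in> EH\<^sup>*"
    hence a: "(u,j) \<in> EH\<^sup>*" "(j,u) \<in> EH\<^sup>*" unfolding C_def by auto
    have "(w,j) \<in> EH\<^sup>*" using H a(1) by (blast intro: rtrancl_trans)
    moreover have "(j,w) \<in> EH\<^sup>*" using H a(2) by (blast intro: rtrancl_trans)
    ultimately show "w \<in> C" unfolding C_def by simp
  next
    fix u v assume H: "(u, v) \<in> EH \<and> v \<in> C"
    hence "(v,j) \<in> EH\<^sup>*" "(u,v) \<in> EH" unfolding C_def by auto
    hence "(u,j) \<in> EH\<^sup>*" by (rule converse_rtrancl_into_rtrancl[rotated])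
    thus "u \<in> C" using bk unfolding C_def by simp
  qed
  thus ?thesis using CS by blast
qed

lemma KL_nonneg:
  assumes "finite S" "\<forall>w\<in>S. 0 < p w \<and> 0 < q w" "(\<Sum>w\<in>S. p w) = 1" "(\<Sum>w\<in>S. q w) = 1"
  shows "0 \<le> KL S p q"
proof -
  have "p w - q w \<le> p w * ln (p w / q w)" if w: "w \<in> S" for w
  proof -
    have pq: "0 < p w" "0 < q w" using assms w by auto
    have "ln (q w / p w) \<le> q w / p w - 1" using pq by (intro ln_le_minus_one) simp
    moreover have "ln (p w / q w) = - ln (q w / p w)" using pq by (simp add: ln_div)
    ultimately have "1 - q w / p w \<le> ln (p w / q w)" by simp
    hence "p w * (1 - q w / p w) \<le> p w * ln (p w / q w)" using pq by (intro mult_left_mono) auto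
    thus ?thesis using pq by (simp add: algebra_simps)
  qed
  hence "(\<Sum>w\<in>S. p w - q w) \<le> (\<Sum>w\<in>S. p w * ln (p w / q w))" by (intro sum_mono)
  thus ?thesis using assms unfolding KL_def by (simp add: sum_subtractf)
qed


lemma spread_lemma:
  fixes Kf :: "nat \<Rightarrow> real"
  assumes E_sub: "E \<subseteq> {..<n} \<times> {..<n}" and F_sub: "F \<subseteq> {..<n}" and Fc: "card F \<le> f"
    and ident: "\<forall>N EH C. reduced_graph1 {..<n} E f N EH \<and> source_component N EH C \<longrightarrow> (\<Sum>j\<in>C. Kf j) \<noteq> 0"
    and Kpos: "\<forall>j\<in>{..<n}. 0 \<le> Kf j"
  shows "\<forall>S \<subseteq> {..<n} - F. S \<noteq> {} \<longrightarrow> S \<inter> {j\<in>{..<n}-F. 0 < Kf j} = {} \<longrightarrow>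
                   (\<exists>j\<in>S. f+1 \<le> card {u\<in>{..<n}-F-S. (u,j)\<in>E})"
proof (intro allI impI)
  fix S assume S: "S \<subseteq> {..<n} - F" "S \<noteq> {}" and SP: "S \<inter> {j\<in>{..<n}-F. 0 < Kf j} = {}"
  show "\<exists>j\<in>S. f+1 \<le> card {u\<in>{..<n}-F-S. (u,j)\<in>E}"
  proof (rule ccontr)
    assume "\<not> ?thesis"
    hence few: "\<forall>j\<in>S. card {u\<in>{..<n}-F-S. (u,j)\<in>E} \<le> f" by auto
    define N where "N = {..<n} - F"
    define EH where "EH = {e\<in>E. fst e \<in> N \<and> snd e \<in> N \<and> \<not> (fst e \<in> N - S \<and> snd e \<in> S)}"
    have red: "reduced_graph1 {..<n} E f N EH"
      unfolding reduced_graph1_def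
    proof (intro exI[of _ F] conjI ballI)
      show "F \<subseteq> {..<n}" "card F \<le> f" "N = {..<n} - F" using F_sub Fc N_def by auto
      show "EH \<subseteq> E \<inter> N \<times> N" unfolding EH_def by auto
    next
      fix i assume i: "i \<in> N"
      show "card {j \<in> N. (j, i) \<in> E \<and> (j, i) \<notin> EH} \<le> f"
      proof (cases "i \<in> S")
        case True
        have "{j \<in> N. (j, i) \<in> E \<and> (j, i) \<notin> EH} = {u\<in>{..<n}-F-S. (u,i)\<in>E}"
          using i True unfolding EH_def N_def by auto
        thus ?thesis using few True by simp
      next
        case False
        have e: "{j \<in> N. (j, i) \<in> E \<and> (j, i) \<notin> EH} = {}"
          using i False unfolding EH_def by auto
        show ?thesis unfolding e by simp
      qed
    qed
    have "\<exists>C\<subseteq>S. source_component N EH C"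
    proof (rule source_exists)
      show "EH \<subseteq> N \<times> N" unfolding EH_def by auto
      show "finite N" unfolding N_def by simp
      show "S \<subseteq> N" "S \<noteq> {}" using S N_def by auto
      show "\<forall>u v. (u, v) \<in> EH \<and> v \<in> S \<longrightarrow> u \<in> S" unfolding EH_def by auto
    qed
    then obtain C where C: "C \<subseteq> S" "source_component N EH C" by blast
    have "(\<Sum>j\<in>C. Kf j) \<noteq> 0" using ident red C by blast
    moreover have "(\<Sum>j\<in>C. Kf j) = 0"
    proof (intro sum.neutral ballI)
      fix j assume "j \<in> C"
      hence "j \<in> S" using C by auto
      hence "j \<in> {..<n}" "\<not> 0 < Kf j" using S SP by auto
      thus "Kf j = 0" using Kpos by force
    qed
    ultimately show False by simp
  qed
qed

lemma small_lemma:
  fixes Kf :: "nat \<Rightarrow> real"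
  assumes E_sub: "E \<subseteq> {..<n} \<times> {..<n}" and irr: "\<forall>i. (i,i) \<notin> E"
    and ident: "\<forall>N EH C. reduced_graph1 {..<n} E f N EH \<and> source_component N EH C \<longrightarrow> (\<Sum>j\<in>C. Kf j) \<noteq> 0"
    and Kpos: "\<forall>j\<in>{..<n}. 0 \<le> Kf j"
  shows "\<forall>j\<in>{..<n}-F. card (in_nbrs E j) \<le> 2*f \<longrightarrow> j \<in> {j\<in>{..<n}-F. 0 < Kf j}"
proof (intro ballI impI)
  fix j assume j: "j \<in> {..<n}-F" and d: "card (in_nbrs E j) \<le> 2*f"
  define I where "I = in_nbrs E j"
  have I_sub: "I \<subseteq> {..<n}" using E_sub unfolding I_def in_nbrs_def by auto
  have jI: "j \<notin> I" using irr unfolding I_def in_nbrs_def by auto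
  have finI: "finite I" using I_sub finite_subset by blast
  obtain F' where F': "F' \<subseteq> I" "card F' = min f (card I)"
    using obtain_subset_with_card_n[of "min f (card I)" I] by auto
  define N where "N = {..<n} - F'"
  define EH where "EH = {e\<in>E. fst e \<in> N \<and> snd e \<in> N \<and> snd e \<noteq> j}"
  have jN: "j \<in> N" using j jI F' unfolding N_def by auto
  have red: "reduced_graph1 {..<n} E f N EH"
    unfolding reduced_graph1_def
  proof (intro exI[of _ F'] conjI ballI)
    show "F' \<subseteq> {..<n}" "card F' \<le> f" "N = {..<n} - F'" using F' I_sub N_def by auto
    show "EH \<subseteq> E \<inter> N \<times> N" unfolding EH_def by auto
  next
    fix i assume i: "i \<in> N"
    show "card {u \<in> N. (u, i) \<in> E \<and> (u, i) \<notin> EH} \<le> f"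
    proof (cases "i = j")
      case True
      have eq: "{u \<in> N. (u, i) \<in> E \<and> (u, i) \<notin> EH} = I - F'"
        using True I_sub unfolding EH_def N_def I_def in_nbrs_def by auto
      have "card (I - F') = card I - card F'" using F' finI by (simp add: card_Diff_subset finite_subset)
      thus ?thesis unfolding eq using F' d[folded I_def] by linarith
    next
      case False
      have e: "{u \<in> N. (u, i) \<in> E \<and> (u, i) \<notin> EH} = {}"
        using i False unfolding EH_def by auto
      show ?thesis unfolding e by simp
    qed
  qed
  have "\<exists>C\<subseteq>{j}. source_component N EH C"
  proof (rule source_exists)
    show "EH \<subseteq> N \<times> N" unfolding EH_def by auto
    show "finite N" unfolding N_def by simp
    show "{j} \<subseteq> N" "{j} \<noteq> {}" using jN by auto
    show "\<forall>u v. (u, v) \<in> EH \<and> v \<in> {j} \<longrightarrow> u \<in> {j}" unfolding EH_def by auto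
  qed
  then obtain C where C: "C \<subseteq> {j}" "source_component N EH C" by blast
  have "C = {j}" using C unfolding source_component_def strongly_connected_component_def by auto
  hence "Kf j \<noteq> 0" using ident red C by force
  moreover have "0 \<le> Kf j" using Kpos j by auto
  ultimately show "j \<in> {j\<in>{..<n}-F. 0 < Kf j}" using j by auto
qed


theorem theorem8:
  fixes n f :: nat
    and E :: "(nat \<times> nat) set"
    and F :: "nat set"
    and \<Theta> :: "'h set" and \<theta>s :: 'h
    and S :: "nat \<Rightarrow> 's set"
    and lik :: "nat \<Rightarrow> 's \<Rightarrow> 'h \<Rightarrow> real"
    and M :: "'w measure"
    and sig :: "nat \<Rightarrow> nat \<Rightarrow> 'w \<Rightarrow> 's"
    and adv :: "'w \<Rightarrow> nat \<Rightarrow> nat \<Rightarrow> nat \<Rightarrow> 'h \<Rightarrow> 'h \<Rightarrow> real"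
  defines "V \<equiv> {..<n}"
  assumes E_sub: "E \<subseteq> V \<times> V"
    and E_irrefl: "\<forall>i. (i, i) \<notin> E"
    and F_sub: "F \<subseteq> V" and F_card: "card F \<le> f"
    and Theta_fin: "finite \<Theta>" and theta_star: "\<theta>s \<in> \<Theta>"
    and S_fin: "\<forall>i\<in>V. finite (S i) \<and> S i \<noteq> {}"
    and l_pos: "\<forall>i\<in>V. \<forall>w\<in>S i. \<forall>\<theta>\<in>\<Theta>. lik i w \<theta> > 0"
    and l_sum: "\<forall>i\<in>V. \<forall>\<theta>\<in>\<Theta>. (\<Sum>w\<in>S i. lik i w \<theta>) = 1"
    and M_prob: "prob_space M"
    and sig_indep: "prob_space.indep_vars M (\<lambda>ti. count_space (S (snd ti)))
                      (\<lambda>ti. sig (fst ti) (snd ti)) ({1..} \<times> V)"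
    and sig_distr: "\<forall>t\<ge>1. \<forall>i\<in>V. \<forall>w\<in>S i.
                      measure M {\<omega> \<in> space M. sig t i \<omega> = w} = lik i w \<theta>s"
    and one_source: "\<forall>N EH. reduced_graph1 V E f N EH \<longrightarrow>
                      (\<exists>!C. source_component N EH C)"
    and identifiable: "\<forall>\<theta>\<in>\<Theta>. \<theta> \<noteq> \<theta>s \<longrightarrow> (\<forall>N EH C.
                      reduced_graph1 V E f N EH \<and> source_component N EH C \<longrightarrow>
                      (\<Sum>j\<in>C. KL (S j) (\<lambda>w. lik j w \<theta>s) (\<lambda>w. lik j w \<theta>)) \<noteq> 0)"
  shows "\<forall>i\<in>V - F. \<forall>\<theta>\<in>\<Theta>. \<theta> \<noteq> \<theta>s \<longrightarrow>
           (AE \<omega> in M.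
              let r = pl E F f (adv \<omega>)
                        (\<lambda>t j a b. ln ((\<Prod>k=1..t. lik j (sig k j \<omega>) a)
                                       / (\<Prod>k=1..t. lik j (sig k j \<omega>) b)))
              in filterlim (\<lambda>t. r t i \<theta>s \<theta>) at_top sequentially \<and>
                 filterlim (\<lambda>t. r t i \<theta> \<theta>s) at_bot sequentially)"
proof (intro ballI impI)
  fix i \<theta> assume i: "i \<in> V - F" and \<theta>: "\<theta> \<in> \<Theta>" and \<theta>ne: "\<theta> \<noteq> \<theta>s"
  interpret prob_space M by (rule M_prob)
  define N where "N = {..<n} - F"
  define Kf where "Kf j = KL (S j) (\<lambda>w. lik j w \<theta>s) (\<lambda>w. lik j w \<theta>)" for j
  have Kpos: "\<forall>j\<in>{..<n}. 0 \<le> Kf j"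
  proof
    fix j assume j: "j \<in> {..<n}"
    show "0 \<le> Kf j" unfolding Kf_def
      using S_fin l_pos l_sum j \<theta> theta_star unfolding V_def by (intro KL_nonneg) auto
  qed
  have ident: "\<forall>N EH C. reduced_graph1 {..<n} E f N EH \<and> source_component N EH C \<longrightarrow> (\<Sum>j\<in>C. Kf j) \<noteq> 0"
    using identifiable \<theta> \<theta>ne unfolding Kf_def V_def by blast
  define P where "P = {j\<in>{..<n}-F. 0 < Kf j}"
  have finF: "finite F" using F_sub unfolding V_def using finite_subset by blast
  have spread: "\<forall>S \<subseteq> {..<n} - F. S \<noteq> {} \<longrightarrow> S \<inter> P = {} \<longrightarrow>
                   (\<exists>j\<in>S. f+1 \<le> card {u\<in>{..<n}-F-S. (u,j)\<in>E})"
    unfolding P_def by (rule spread_lemma[OF E_sub[unfolded V_def] F_sub[unfolded V_def] F_card ident Kpos])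
  have small: "\<forall>j\<in>{..<n}-F. card (in_nbrs E j) \<le> 2*f \<longrightarrow> j \<in> P"
    unfolding P_def by (rule small_lemma[OF E_sub[unfolded V_def] E_irrefl ident Kpos])
  define c where "c = (if P = {} then 1 else Min (Kf ` P) / 2)"
  have finP: "finite P" unfolding P_def by simp
  have cpos: "0 < c"
  proof (cases "P = {}")
    case False
    have "0 < Min (Kf ` P)" using False finP by (subst Min_gr_iff) (auto simp: P_def)
    thus ?thesis using False unfolding c_def by simp
  qed (simp add: c_def)
  have cP: "2 * c \<le> Kf j" if "j \<in> P" for j
  proof -
    have "P \<noteq> {}" using that by auto
    hence "c = Min (Kf ` P) / 2" unfolding c_def by simp
    moreover have "Min (Kf ` P) \<le> Kf j" using finP that by (intro Min_le) auto
    ultimately show ?thesis by simp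
  qed
  define \<epsilon> where "\<epsilon> = c / (4 * real n ^ (n+1))"
  have npos: "0 < n" using i unfolding V_def by auto
  have epos: "0 < \<epsilon>" unfolding \<epsilon>_def using cpos npos by simp
  have ec: "\<epsilon> \<le> c"
  proof -
    have "1 \<le> real n" using npos by simp
    hence "1 \<le> real n ^ (n+1)" by (rule one_le_power)
    hence "1 \<le> 4 * real n ^ (n+1)" by simp
    hence "c / (4 * real n ^ (n+1)) \<le> c / 1" using cpos by (intro divide_left_mono) auto
    thus ?thesis unfolding \<epsilon>_def by simp
  qed
  define g where "g j w = ln (lik j w \<theta>s / lik j w \<theta>)" for j w
  have AEj: "\<forall>j\<in>N. AE \<omega> in M. eventually (\<lambda>t. \<bar>(\<Sum>k=1..t. g j (sig k j \<omega>)) - real t * Kf j\<bar> < \<epsilon> * real t) sequentially"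
  proof
    fix j assume j: "j \<in> N"
    have jV: "j \<in> {..<n}" using j unfolding N_def by auto
    have "AE \<omega> in M. eventually (\<lambda>t. \<bar>(\<Sum>k=1..t. g j ((\<lambda>ti. sig (fst ti) (snd ti)) (k,j) \<omega>)) - real t * (\<Sum>w\<in>S j. lik j w \<theta>s * g j w)\<bar> < \<epsilon> * real t) sequentially"
      using S_fin sig_distr jV epos
      by (intro slln_pair[OF sig_indep[unfolded V_def]]) (auto simp: V_def)
    moreover have "(\<Sum>w\<in>S j. lik j w \<theta>s * g j w) = Kf j" unfolding Kf_def KL_def g_def by simp
    ultimately show "AE \<omega> in M. eventually (\<lambda>t. \<bar>(\<Sum>k=1..t. g j (sig k j \<omega>)) - real t * Kf j\<bar> < \<epsilon> * real t) sequentially"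
      by simp
  qed
  have finN: "finite N" unfolding N_def by simp
  have AEall: "AE \<omega> in M. \<forall>j\<in>N. eventually (\<lambda>t. \<bar>(\<Sum>k=1..t. g j (sig k j \<omega>)) - real t * Kf j\<bar> < \<epsilon> * real t) sequentially"
    using AEj finN by (simp add: AE_finite_all)
  have rv: "\<forall>ti\<in>{1..} \<times> V. random_variable (count_space (S (snd ti))) (sig (fst ti) (snd ti))"
    using sig_indep unfolding indep_vars_def2 by (rule conjunct1)
  have sigS: "sig k j \<omega> \<in> S j" if "1 \<le> k" "j \<in> V" "\<omega> \<in> space M" for k j \<omega>
    using measurable_space[OF rv[rule_format, of "(k,j)"] that(3)] that by auto
  show "AE \<omega> in M.
              let r = pl E F f (adv \<omega>)
                        (\<lambda>t j a b. ln ((\<Prod>k=1..t. lik j (sig k j \<omega>) a)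
                                       / (\<Prod>k=1..t. lik j (sig k j \<omega>) b)))
              in filterlim (\<lambda>t. r t i \<theta>s \<theta>) at_top sequentially \<and>
                 filterlim (\<lambda>t. r t i \<theta> \<theta>s) at_bot sequentially"
    using AEall
  proof (rule AE_mp, intro AE_I2 impI)
    fix \<omega> assume \<omega>: "\<omega> \<in> space M"
      and H: "\<forall>j\<in>N. eventually (\<lambda>t. \<bar>(\<Sum>k=1..t. g j (sig k j \<omega>)) - real t * Kf j\<bar> < \<epsilon> * real t) sequentially"
    define L\<omega> where "L\<omega> = (\<lambda>t j a b. ln ((\<Prod>k=1..t. lik j (sig k j \<omega>) a) / (\<Prod>k=1..t. lik j (sig k j \<omega>) b)))"
    have "eventually (\<lambda>t. \<forall>j\<in>N. \<bar>(\<Sum>k=1..t. g j (sig k j \<omega>)) - real t * Kf j\<bar> < \<epsilon> * real t) sequentially"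
      using H finN by (simp add: eventually_ball_finite)
    then obtain T where T: "\<forall>t\<ge>T. \<forall>j\<in>N. \<bar>(\<Sum>k=1..t. g j (sig k j \<omega>)) - real t * Kf j\<bar> < \<epsilon> * real t"
      unfolding eventually_sequentially by blast
    have prodpos: "0 < (\<Prod>k=1..t. lik j (sig k j \<omega>) a)" if "j \<in> N" "a \<in> \<Theta>" for t j a
    proof (intro prod_pos ballI)
      fix k assume "k \<in> {1..t}"
      thus "0 < lik j (sig k j \<omega>) a" using l_pos sigS[of k j \<omega>] \<omega> that unfolding N_def V_def by auto
    qed
    have lndiv: "ln (A / B) = ln A - ln B" if "0 < A" "0 < B" for A B :: real
      using that by (simp add: ln_div)
    have Leq: "L\<omega> t j \<theta>s \<theta> = (\<Sum>k=1..t. g j (sig k j \<omega>))" if j: "j \<in> N" for t j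
    proof -
      have pp: "0 < lik j (sig k j \<omega>) a" if "k \<in> {1..t}" "a \<in> \<Theta>" for k a
        using l_pos sigS[of k j \<omega>] \<omega> that j unfolding N_def V_def by auto
      have "L\<omega> t j \<theta>s \<theta> = ln (\<Prod>k=1..t. lik j (sig k j \<omega>) \<theta>s) - ln (\<Prod>k=1..t. lik j (sig k j \<omega>) \<theta>)"
        unfolding L\<omega>_def by (rule lndiv[OF prodpos[OF j theta_star] prodpos[OF j \<theta>]])
      also have "\<dots> = (\<Sum>k=1..t. ln (lik j (sig k j \<omega>) \<theta>s)) - (\<Sum>k=1..t. ln (lik j (sig k j \<omega>) \<theta>))"
      proof -
        have "ln (\<Prod>k=1..t. lik j (sig k j \<omega>) \<theta>s) = (\<Sum>k=1..t. ln (lik j (sig k j \<omega>) \<theta>s))"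
          by (rule ln_prod) (use pp theta_star in force)+
        moreover have "ln (\<Prod>k=1..t. lik j (sig k j \<omega>) \<theta>) = (\<Sum>k=1..t. ln (lik j (sig k j \<omega>) \<theta>))"
          by (rule ln_prod) (use pp \<theta> in force)+
        ultimately show ?thesis by simp
      qed
      also have "\<dots> = (\<Sum>k=1..t. g j (sig k j \<omega>))"
        unfolding g_def sum_subtractf[symmetric]
      proof (intro sum.cong refl)
        fix k assume "k \<in> {1..t}"
        thus "ln (lik j (sig k j \<omega>) \<theta>s) - ln (lik j (sig k j \<omega>) \<theta>) = ln (lik j (sig k j \<omega>) \<theta>s / lik j (sig k j \<omega>) \<theta>)"
          using lndiv[OF pp pp] theta_star \<theta> by metis
      qed
      finally show ?thesis .
    qed
    have lnsw: "- ln (B / A) = ln (A / B)" if "0 < A" "0 < B" for A B :: real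
      using that by (simp add: ln_div)
    have Lneg: "- L\<omega> t j \<theta> \<theta>s = L\<omega> t j \<theta>s \<theta>" if j: "j \<in> N" for t j
      unfolding L\<omega>_def by (rule lnsw[OF prodpos[OF j theta_star] prodpos[OF j \<theta>]])
    have growth: "\<forall>t\<ge>T. \<forall>j\<in>{..<n}-F. - (c / (4 * real n ^ (n+1))) * real t \<le> L\<omega> t j \<theta>s \<theta>
                    \<and> (j \<in> P \<longrightarrow> c * real t \<le> L\<omega> t j \<theta>s \<theta>)"
    proof (intro allI impI ballI conjI)
      fix t j assume t: "T \<le> t" and j: "j \<in> {..<n}-F"
      have jN: "j \<in> N" using j unfolding N_def .
      have b: "real t * Kf j - \<epsilon> * real t < L\<omega> t j \<theta>s \<theta>" using T t jN Leq[OF jN] by force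
      have k0: "0 \<le> real t * Kf j" using Kpos j by simp
      show "- (c / (4 * real n ^ (n+1))) * real t \<le> L\<omega> t j \<theta>s \<theta>"
        using b k0 unfolding \<epsilon>_def by simp
      assume jP: "j \<in> P"
      have "real t * (2 * c) \<le> real t * Kf j" using cP[OF jP] by (intro mult_left_mono) auto
      moreover have "\<epsilon> * real t \<le> c * real t" using ec by (intro mult_right_mono) auto
      ultimately show "c * real t \<le> L\<omega> t j \<theta>s \<theta>" using b by (simp add: algebra_simps)
    qed
    have Nne: "{..<n} - F \<noteq> {}" using i unfolding V_def by auto
    have iN: "i \<in> {..<n} - F" using i unfolding V_def .
    have d1: "filterlim (\<lambda>t. pl E F f (adv \<omega>) L\<omega> t i \<theta>s \<theta>) at_top sequentially"
      by (rule diverge[where L=L\<omega> and a=\<theta>s and b=\<theta> and adv="adv \<omega>", OF E_sub[unfolded V_def] E_irrefl finF F_card Nne spread small cpos growth iN])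
    define adv' where "adv' = (\<lambda>t j i a b. - adv \<omega> t j i b a)"
    define L' where "L' = (\<lambda>t j a b. - L\<omega> t j b a)"
    have growth': "\<forall>t\<ge>T. \<forall>j\<in>{..<n}-F. - (c / (4 * real n ^ (n+1))) * real t \<le> L' t j \<theta>s \<theta>
                    \<and> (j \<in> P \<longrightarrow> c * real t \<le> L' t j \<theta>s \<theta>)"
      using growth Lneg unfolding L'_def N_def by simp
    have d2: "filterlim (\<lambda>t. pl E F f adv' L' t i \<theta>s \<theta>) at_top sequentially"
      by (rule diverge[where L=L' and a=\<theta>s and b=\<theta> and adv=adv', OF E_sub[unfolded V_def] E_irrefl finF F_card Nne spread small cpos growth' iN])
    have "pl E F f (adv \<omega>) L\<omega> t i \<theta> \<theta>s = - pl E F f adv' L' t i \<theta>s \<theta>" for t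
      unfolding adv'_def L'_def by (rule pl_neg)
    hence d3: "filterlim (\<lambda>t. pl E F f (adv \<omega>) L\<omega> t i \<theta> \<theta>s) at_bot sequentially"
      using d2 by (simp add: filterlim_uminus_at_bot)
    show "let r = pl E F f (adv \<omega>)
                        (\<lambda>t j a b. ln ((\<Prod>k=1..t. lik j (sig k j \<omega>) a)
                                       / (\<Prod>k=1..t. lik j (sig k j \<omega>) b)))
              in filterlim (\<lambda>t. r t i \<theta>s \<theta>) at_top sequentially \<and>
                 filterlim (\<lambda>t. r t i \<theta> \<theta>s) at_bot sequentially"
      using d1 d3 unfolding L\<omega>_def Let_def by simp
  qed
qed


end
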